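(* Let $n\ge 2$ and let $\Delta^o(SD_{8n})$ be the order super commuting graph of the semidihedral group $SD_{8n}$. Then the Sombor spectrum of $\Delta^o(SD_{8n})$ consists of $-(8n-1)\sqrt2$ with multiplicity $8n-1$ and $(8n-1)^2\sqrt2$ with multiplicity $1$.
   Context: For a finite simple graph $\Gamma$ with vertices $u_1,\dots,u_N$, the Sombor matrix $S(\Gamma)$ has $(i,j)$ entry $\sqrt{\deg(u_i)^2+\deg(u_j)^2}$ if $u_i,u_j$ are adjacent and $0$ otherwise; the Sombor spectrum is the multiset of its eigenvalues. $SD_{8n}=\langle a,b: a^{4n}=b^2=e,\ ba=a^{2n-1}b\rangle$. The order super commuting graph $\Delta^o(G)$ has vertex set $G$, and distinct $g,h$ are adjacent iff $o(g)=o(h)$ or there exist distinct $g',h'\in G$ with $o(g')=o(g)$, $o(h')=o(h)$ and $g'h'=h'g'$; here $o(x)$ is the order of $x$. *)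

theory Defs
  imports "HOL-Algebra.Multiplicative_Group" "Jordan_Normal_Form.Char_Poly"
    "HOL-Computational_Algebra.Polynomial"
begin

text \<open>Concrete model of the semidihedral group
  SD_{8n} = <a, b | a^{4n} = b^2 = e, b a = a^{2n-1} b>.
  The pair (i, j) with i < 4n, j < 2 represents a^i b^j.
  Since b a^k = a^{k(2n-1)} b, we have
  (a^i b^j)(a^k b^l) = a^{i + k (2n-1)^j} b^{j+l}.\<close>

definition SD :: "nat \<Rightarrow> (nat \<times> nat) monoid" where
  "SD n = \<lparr> carrier = {(i, j). i < 4 * n \<and> j < 2},
            monoid.mult = (\<lambda>(i, j) (k, l). ((i + k * (2 * n - 1) ^ j) mod (4 * n), (j + l) mod 2)),
            monoid.one = (0, 0) \<rparr>"

definition order_super_commuting_adj :: "('a, 'b) monoid_scheme \<Rightarrow> 'a \<Rightarrow> 'a \<Rightarrow> bool" where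
  "order_super_commuting_adj G g h \<longleftrightarrow>
     g \<in> carrier G \<and> h \<in> carrier G \<and> g \<noteq> h \<and>
     (group.ord G g = group.ord G h \<or>
      (\<exists>g' \<in> carrier G. \<exists>h' \<in> carrier G. g' \<noteq> h' \<and>
         group.ord G g' = group.ord G g \<and> group.ord G h' = group.ord G h \<and>
         g' \<otimes>\<^bsub>G\<^esub> h' = h' \<otimes>\<^bsub>G\<^esub> g'))"

definition graph_degree :: "'a set \<Rightarrow> ('a \<Rightarrow> 'a \<Rightarrow> bool) \<Rightarrow> 'a \<Rightarrow> nat" where
  "graph_degree V E u = card {v \<in> V. E u v}"

definition sombor_matrix :: "'a set \<Rightarrow> ('a \<Rightarrow> 'a \<Rightarrow> bool) \<Rightarrow> 'a list \<Rightarrow> real mat" where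
  "sombor_matrix V E vs = mat (length vs) (length vs) (\<lambda>(i, j).
     if E (vs ! i) (vs ! j)
     then sqrt (real (graph_degree V E (vs ! i)) ^ 2 + real (graph_degree V E (vs ! j)) ^ 2)
     else 0)"

definition sombor_spectrum :: "'a set \<Rightarrow> ('a \<Rightarrow> 'a \<Rightarrow> bool) \<Rightarrow> 'a list \<Rightarrow> real multiset" where
  "sombor_spectrum V E vs = proots (char_poly (sombor_matrix V E vs))"

end

theory Submission
  imports Defs
begin


lemma SD_mult: "(i,j) \<otimes>\<^bsub>SD n\<^esub> (k,l) = ((i + k * (2 * n - 1) ^ j) mod (4 * n), (j + l) mod 2)"
  by (simp add: SD_def)

lemma c_pow_mod:
  assumes "n \<ge> 1"
  shows "((2*n-1)::nat) ^ e mod (4*n) = (2*n-1) ^ (e mod 2) mod (4*n)"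
proof -
  obtain m where m: "n = Suc m" using assms by (cases n) auto
  have c2: "((2*n-1)::nat)^2 mod (4*n) = 1"
  proof -
    have "((2*n-1)::nat)^2 = 1 + (4*n)*m" using m by (simp add: power2_eq_square algebra_simps)
    moreover have "(1 + (4*n)*m) mod (4*n) = (1::nat)" using m by (simp add: mod_Suc)
    ultimately show ?thesis by simp
  qed
  have N1: "(1::nat) mod (4*n) = 1" using m by simp
  have "((2*n-1)::nat) ^ e = (2*n-1) ^ (2*(e div 2) + e mod 2)" by simp
  also have "\<dots> = ((2*n-1)^2)^(e div 2) * (2*n-1)^(e mod 2)"
    by (simp only: power_add power_mult)
  finally have E: "((2*n-1)::nat) ^ e = ((2*n-1)^2)^(e div 2) * (2*n-1)^(e mod 2)" .
  have P: "(((2*n-1)::nat)^2)^(e div 2) mod (4*n) = 1"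
  proof -
    have "(((2*n-1)::nat)^2)^(e div 2) mod (4*n) = ((((2*n-1)::nat)^2 mod (4*n))^(e div 2)) mod (4*n)"
      by (rule power_mod[symmetric])
    then show ?thesis using c2 N1 by simp
  qed
  have "((2*n-1)::nat) ^ e mod (4*n) = ((((2*n-1)^2)^(e div 2)) mod (4*n)) * (2*n-1)^(e mod 2) mod (4*n)"
    unfolding E by (rule mod_mult_left_eq[symmetric])
  also have "\<dots> = (2*n-1) ^ (e mod 2) mod (4*n)" unfolding P by simp
  finally show ?thesis .
qed

lemma SD_group:
  assumes "n \<ge> 1"
  shows "group (SD n)"
proof (rule groupI)
  let ?N = "4*n" and ?c = "(2*n-1)::nat"
  show "\<one>\<^bsub>SD n\<^esub> \<in> carrier (SD n)" using assms by (simp add: SD_def)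
  show "\<And>x y. x\<in>carrier (SD n) \<Longrightarrow> y\<in>carrier (SD n) \<Longrightarrow> x \<otimes>\<^bsub>SD n\<^esub> y \<in> carrier (SD n)"
    using assms by (auto simp: SD_def)
  show "\<And>x. x\<in>carrier (SD n) \<Longrightarrow> \<one>\<^bsub>SD n\<^esub> \<otimes>\<^bsub>SD n\<^esub> x = x"
    by (auto simp: SD_def)
  show "\<And>x. x\<in>carrier (SD n) \<Longrightarrow> \<exists>y\<in>carrier (SD n). y \<otimes>\<^bsub>SD n\<^esub> x = \<one>\<^bsub>SD n\<^esub>"
  proof -
    fix x assume "x \<in> carrier (SD n)"
    then obtain i j where x: "x = (i,j)" "i < ?N" "j < 2" by (auto simp: SD_def)
    let ?y = "((i*(?N-1)*?c^j) mod ?N, j)"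
    have "i*(?N-1)*?c^j + i*?c^j = ?N * (i*?c^j)" using assms
      by (simp add: algebra_simps diff_mult_distrib2)
    then have "?y \<otimes>\<^bsub>SD n\<^esub> x = \<one>\<^bsub>SD n\<^esub>" using x
      by (simp add: SD_mult mod_add_left_eq) (simp add: SD_def)
    moreover have "?y \<in> carrier (SD n)" using x assms by (simp add: SD_def)
    ultimately show "\<exists>y\<in>carrier (SD n). y \<otimes>\<^bsub>SD n\<^esub> x = \<one>\<^bsub>SD n\<^esub>" by blast
  qed
  show "\<And>x y z. x \<in> carrier (SD n) \<Longrightarrow> y \<in> carrier (SD n) \<Longrightarrow> z \<in> carrier (SD n) \<Longrightarrow>
       x \<otimes>\<^bsub>SD n\<^esub> y \<otimes>\<^bsub>SD n\<^esub> z = x \<otimes>\<^bsub>SD n\<^esub> (y \<otimes>\<^bsub>SD n\<^esub> z)"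
  proof -
    fix x y z :: "nat \<times> nat"
    obtain i j where x: "x = (i,j)" by fastforce
    obtain k l where y: "y = (k,l)" by fastforce
    obtain p q where z: "z = (p,q)" by fastforce
    have L: "x \<otimes>\<^bsub>SD n\<^esub> y \<otimes>\<^bsub>SD n\<^esub> z = ((i + k*?c^j + p*?c^((j+l) mod 2)) mod ?N, (j+l+q) mod 2)"
      by (simp add: x y z SD_mult mod_add_left_eq)
    have R: "x \<otimes>\<^bsub>SD n\<^esub> (y \<otimes>\<^bsub>SD n\<^esub> z) = ((i + (k + p*?c^l)*?c^j) mod ?N, (j+l+q) mod 2)"
    proof -
      have R0: "(i + ((k + p*?c^l) mod ?N) * ?c^j) mod ?N = (i + (k + p*?c^l)*?c^j) mod ?N"
      proof -
        have "(i + ((k + p*?c^l) mod ?N) * ?c^j) mod ?N = (i + (((k + p*?c^l) mod ?N) * ?c^j) mod ?N) mod ?N"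
          by (rule mod_add_right_eq[symmetric])
        also have "((k + p*?c^l) mod ?N) * ?c^j mod ?N = ((k + p*?c^l) * ?c^j) mod ?N"
          by (rule mod_mult_left_eq)
        also have "(i + ((k + p*?c^l) * ?c^j) mod ?N) mod ?N = (i + (k + p*?c^l)*?c^j) mod ?N"
          by (rule mod_add_right_eq)
        finally show ?thesis .
      qed
      show ?thesis using R0 by (simp add: x y z SD_mult mod_add_right_eq add.assoc)
    qed
    have "(p*?c^l*?c^j) mod ?N = p*?c^((j+l) mod 2) mod ?N"
    proof -
      have "(p*?c^l*?c^j) mod ?N = p * (?c^(j+l) mod ?N) mod ?N"
      proof -
        have eq: "p*?c^l*?c^j = p*?c^(j+l)" by (simp add: power_add algebra_simps)
        show ?thesis unfolding eq by (rule mod_mult_right_eq[symmetric])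
      qed
      also have "\<dots> = p * (?c^((j+l) mod 2) mod ?N) mod ?N" by (subst c_pow_mod[OF assms, of "j+l"]) (rule refl)
      also have "\<dots> = p*?c^((j+l) mod 2) mod ?N" by (simp add: mod_mult_right_eq)
      finally show ?thesis .
    qed
    then have "(i + k*?c^j + p*?c^((j+l) mod 2)) mod ?N = (i + (k + p*?c^l)*?c^j) mod ?N"
    proof -
      assume P: "(p*?c^l*?c^j) mod ?N = p*?c^((j+l) mod 2) mod ?N"
      have "(i + k*?c^j + p*?c^((j+l) mod 2)) mod ?N = (i + k*?c^j + p*?c^((j+l) mod 2) mod ?N) mod ?N"
        by (simp add: mod_add_right_eq)
      also have "\<dots> = (i + k*?c^j + (p*?c^l*?c^j) mod ?N) mod ?N" using P by simp
      also have "\<dots> = (i + k*?c^j + p*?c^l*?c^j) mod ?N" by (simp add: mod_add_right_eq)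
      also have "i + k*?c^j + p*?c^l*?c^j = i + (k + p*?c^l)*?c^j" by (simp add: algebra_simps)
      finally show ?thesis .
    qed
    then show "x \<otimes>\<^bsub>SD n\<^esub> y \<otimes>\<^bsub>SD n\<^esub> z = x \<otimes>\<^bsub>SD n\<^esub> (y \<otimes>\<^bsub>SD n\<^esub> z)"
      using L R by simp
  qed
qed



lemma SD_pow0: "x [^]\<^bsub>SD n\<^esub> (0::nat) = (0,0)"
  by (simp add: nat_pow_def SD_def)

lemma SD_powSuc: "x [^]\<^bsub>SD n\<^esub> (Suc k) = (x [^]\<^bsub>SD n\<^esub> k) \<otimes>\<^bsub>SD n\<^esub> x"
  by (simp add: nat_pow_def)

lemma SD_one: "\<one>\<^bsub>SD n\<^esub> = (0,0)"
  by (simp add: SD_def)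

lemma ord_eqI:
  assumes grp: "group G" and "\<And>k::nat. (x [^]\<^bsub>G\<^esub> k = \<one>\<^bsub>G\<^esub>) = (y [^]\<^bsub>G\<^esub> k = \<one>\<^bsub>G\<^esub>)"
  shows "group.ord G x = group.ord G y"
  unfolding group.ord_def[OF grp] by (rule arg_cong[where f=Eps]) (simp add: assms(2))

lemma rot_pow: "(r,0) [^]\<^bsub>SD n\<^esub> (k::nat) = ((k*r) mod (4*n), 0)"
  by (induction k) (simp_all add: SD_pow0 SD_powSuc SD_mult SD_one mod_add_right_eq add.commute)

lemma refl_pow:
  assumes "n \<ge> 1"
  shows "(i,1) [^]\<^bsub>SD n\<^esub> (2*m) = ((m*(2*n*i)) mod (4*n), 0) \<and>
         (i,1) [^]\<^bsub>SD n\<^esub> (Suc (2*m)) = ((m*(2*n*i) + i) mod (4*n), 1)"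
proof (induction m)
  case 0
  then show ?case by (simp add: SD_pow0 SD_powSuc SD_mult SD_one)
next
  case (Suc m)
  let ?N = "4*n" and ?A = "m * (2 * n * i)"
  have e: "?A + i + i * (2 * n - 1) = Suc m * (2*n*i)"
  proof -
    obtain n' where "n = Suc n'" using assms by (cases n) auto
    then show ?thesis by (simp add: algebra_simps)
  qed
  have "(i,1) [^]\<^bsub>SD n\<^esub> (2*Suc m) = (i,1) [^]\<^bsub>SD n\<^esub> (Suc (2*m)) \<otimes>\<^bsub>SD n\<^esub> (i,1)"
    by (simp add: SD_powSuc del: mult_Suc)
  also have "\<dots> = (((?A + i) mod ?N + i * (2*n-1)^1) mod ?N, (1+1) mod 2)"
    using Suc.IH by (simp only: SD_mult)
  also have "((?A + i) mod ?N + i * (2*n-1)^1) mod ?N = (Suc m * (2*n*i)) mod ?N"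
  proof -
    have "((?A + i) mod ?N + i * (2*n-1)^1) mod ?N = (?A + i + i * (2*n-1)^1) mod ?N"
      by (rule mod_add_left_eq)
    then show ?thesis unfolding power_one_right e .
  qed
  finally have 1: "(i,1) [^]\<^bsub>SD n\<^esub> (2*Suc m) = ((Suc m*(2*n*i)) mod ?N, 0)" by simp
  have "(i,1) [^]\<^bsub>SD n\<^esub> (Suc (2*Suc m)) = (i,1) [^]\<^bsub>SD n\<^esub> (2*Suc m) \<otimes>\<^bsub>SD n\<^esub> (i,1)"
    by (rule SD_powSuc)
  also have "\<dots> = (((Suc m*(2*n*i)) mod ?N + i * (2*n-1)^0) mod ?N, (0+1) mod 2)"
    unfolding 1 by (simp only: SD_mult)
  also have "((Suc m*(2*n*i)) mod ?N + i * (2*n-1)^0) mod ?N = (Suc m*(2*n*i) + i) mod ?N"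
    by (simp add: mod_add_left_eq)
  finally have 2: "(i,1) [^]\<^bsub>SD n\<^esub> (Suc (2*Suc m)) = ((Suc m*(2*n*i) + i) mod ?N, 1)" by simp
  show ?case using 1 2 by blast
qed

lemma refl_pow_one:
  assumes "n \<ge> 1"
  shows "((i,1) [^]\<^bsub>SD n\<^esub> k = \<one>\<^bsub>SD n\<^esub>) = (even k \<and> 4*n dvd (k div 2) * (2*n*i))"
proof (cases "even k")
  case True
  then obtain m where "k = 2*m" by auto
  then show ?thesis using refl_pow[OF assms, of i m] by (simp add: SD_one dvd_eq_mod_eq_0)
next
  case False
  then obtain m where km: "k = Suc (2*m)" by (metis oddE Suc_eq_plus1)
  have "(i,1) [^]\<^bsub>SD n\<^esub> k = ((m*(2*n*i) + i) mod (4*n), 1)" using refl_pow[OF assms, of i m] km by blast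
  then show ?thesis using False by (simp add: SD_one)
qed

lemma rot_pow_one: "((r,0) [^]\<^bsub>SD n\<^esub> k = \<one>\<^bsub>SD n\<^esub>) = (4*n dvd k*r)"
  by (simp add: rot_pow SD_one dvd_eq_mod_eq_0)

lemma exists_rot:
  assumes "n \<ge> 1" "x \<in> carrier (SD n)"
  shows "\<exists>r < 4*n. group.ord (SD n) x = group.ord (SD n) (r,0)"
proof -
  obtain i j where x: "x = (i,j)" "i < 4*n" "j < 2" using assms by (auto simp: SD_def)
  show ?thesis
  proof (cases "j = 0")
    case True then show ?thesis using x by auto
  next
    case False
    then have j: "j = 1" using x by auto
    show ?thesis
    proof (cases "even i")
      case True
      then obtain t where t: "i = 2*t" by auto
      have "((i,1) [^]\<^bsub>SD n\<^esub> k = \<one>\<^bsub>SD n\<^esub>) = ((2*n,0) [^]\<^bsub>SD n\<^esub> k = \<one>\<^bsub>SD n\<^esub>)" for k :: nat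
      proof -
        have "(k div 2) * (2*n*i) = 4*n*((k div 2)*t)" using t by (simp add: algebra_simps)
        then have a: "4*n dvd (k div 2) * (2*n*i)" by (metis dvd_triv_left)
        have b: "(4*n dvd k*(2*n)) = (2*n*2 dvd 2*n*k)" by (simp add: algebra_simps)
        also have "\<dots> = (2 dvd k)" by (rule nat_mult_dvd_cancel1) (use assms in simp)
        finally have b: "(4*n dvd k*(2*n)) = (2 dvd k)" .
        show ?thesis unfolding refl_pow_one[OF assms(1)] rot_pow_one using a b by simp
      qed
      then show ?thesis using x j assms by (intro exI[of _ "2*n"]) (auto intro: ord_eqI[OF SD_group[OF assms(1)]])
    next
      case False
      have "((i,1) [^]\<^bsub>SD n\<^esub> k = \<one>\<^bsub>SD n\<^esub>) = ((n,0) [^]\<^bsub>SD n\<^esub> k = \<one>\<^bsub>SD n\<^esub>)" for k :: nat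
      proof -
        have a: "(4*n dvd (k div 2) * (2*n*i)) = (2*n*2 dvd 2*n*((k div 2) * i))"
          by (simp add: algebra_simps)
        also have "\<dots> = (2 dvd (k div 2) * i)" by (rule nat_mult_dvd_cancel1) (use assms in simp)
        also have "\<dots> = (2 dvd k div 2)" using False by simp
        finally have a: "(4*n dvd (k div 2) * (2*n*i)) = (2 dvd k div 2)" .
        have b: "(4*n dvd k*n) = (n*4 dvd n*k)" by (simp add: algebra_simps)
        also have "\<dots> = (4 dvd k)" by (rule nat_mult_dvd_cancel1) (use assms in simp)
        finally have b: "(4*n dvd k*n) = (4 dvd k)" .
        have c: "(even k \<and> 2 dvd k div 2) = (4 dvd k)" by presburger
        show ?thesis unfolding refl_pow_one[OF assms(1)] rot_pow_one using a b c by simp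
      qed
      then show ?thesis using x j assms by (intro exI[of _ "n"]) (auto intro: ord_eqI[OF SD_group[OF assms(1)]])
    qed
  qed
qed

lemma adj_iff:
  assumes "n \<ge> 1"
  shows "order_super_commuting_adj (SD n) g h \<longleftrightarrow> g \<in> carrier (SD n) \<and> h \<in> carrier (SD n) \<and> g \<noteq> h"
proof
  assume "g \<in> carrier (SD n) \<and> h \<in> carrier (SD n) \<and> g \<noteq> h"
  then have g: "g \<in> carrier (SD n)" and h: "h \<in> carrier (SD n)" and gh: "g \<noteq> h" by auto
  obtain r where r: "r < 4*n" "group.ord (SD n) g = group.ord (SD n) (r,0)" using exists_rot[OF assms g] by auto
  obtain s where s: "s < 4*n" "group.ord (SD n) h = group.ord (SD n) (s,0)" using exists_rot[OF assms h] by auto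
  show "order_super_commuting_adj (SD n) g h"
  proof (cases "group.ord (SD n) g = group.ord (SD n) h")
    case True then show ?thesis using g h gh by (simp add: order_super_commuting_adj_def)
  next
    case False
    then have "(r,0) \<noteq> (s,0)" using r s by auto
    moreover have "(r,0) \<otimes>\<^bsub>SD n\<^esub> (s,0) = (s,0) \<otimes>\<^bsub>SD n\<^esub> (r,0)" by (simp add: SD_mult add.commute)
    ultimately show ?thesis using g h gh r s unfolding order_super_commuting_adj_def
      by (intro conjI disjI2 bexI[of _ "(r,0)"] bexI[of _ "(s,0)"]) (auto simp: SD_def)
  qed
qed (auto simp: order_super_commuting_adj_def)



lemma sum_delta_mult:
  fixes f :: "nat \<Rightarrow> 'a::comm_ring_1"
  assumes "finite A"
  shows "(\<Sum>k\<in>A. f k * (if k = j then 1 else 0)) = (if j \<in> A then f j else 0)"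
  by (subst sum.cong[OF refl, of _ _ "\<lambda>k. if k = j then f k else 0"]) (auto simp: assms sum.delta')

lemma det_aIbJ:
  fixes a b :: "'a::comm_ring_1"
  assumes m: "m \<ge> 1"
  shows "det (mat m m (\<lambda>(i,j). if i=j then a+b else b)) = (a + of_nat m * b) * a^(m-1)"
proof -
  define M where "M = mat m m (\<lambda>(i,j). if i=j then a+b else b)"
  define C :: "'a mat" where "C = mat m m (\<lambda>(i,j). if i=j \<or> j=0 then 1 else 0)"
  define R :: "'a mat" where "R = mat m m (\<lambda>(i,j). (if j=i then 1 else 0) - (if j=0 \<and> i\<noteq>0 then 1 else 0))"
  define N where "N = mat m m (\<lambda>(i,j). if j=0 then a + of_nat m * b else if i=j then a+b else b)"
  define T where "T = mat m m (\<lambda>(i,j). if i = 0 then (if j=0 then a + of_nat m * b else b)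
       else if j = 0 then 0 else if i=j then a else 0)"
  have MC: "M * C = N"
  proof (rule eq_matI)
    fix i j assume ij: "i < dim_row N" "j < dim_col N"
    show "(M * C) $$ (i, j) = N $$ (i, j)"
    proof (cases "j = 0")
      case True
      have "(M * C) $$ (i, j) = (\<Sum>k<m. b + (if k = i then a else 0))"
        using ij True unfolding M_def C_def N_def
        by (auto simp: scalar_prod_def lessThan_atLeast0 intro!: sum.cong)
      also have "\<dots> = of_nat m * b + a" using ij unfolding N_def
        by (simp add: sum.distrib)
      finally show ?thesis using ij True unfolding N_def by (simp add: algebra_simps)
    next
      case False
      show ?thesis
        using ij False unfolding M_def C_def N_def
        by (auto simp: scalar_prod_def sum_delta_mult)
    qed
  qed (auto simp: M_def C_def N_def)
  have RN: "R * N = T"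
  proof (rule eq_matI)
    fix i j assume ij: "i < dim_row T" "j < dim_col T"
    have "(R * N) $$ (i, j) = (\<Sum>k<m. (if k = i then N $$ (k,j) else 0) - (if k = 0 then (if i \<noteq> 0 then N $$ (k,j) else 0) else 0))"
      using ij unfolding R_def T_def
      by (auto simp: scalar_prod_def lessThan_atLeast0 N_def left_diff_distrib intro!: sum.cong)
    also have "\<dots> = N $$ (i,j) - (if i \<noteq> 0 then N $$ (0,j) else 0)"
      using ij m unfolding T_def by (simp add: sum_subtractf)
    finally show "(R * N) $$ (i, j) = T $$ (i, j)" using ij unfolding T_def N_def by auto
  qed (auto simp: R_def N_def T_def)
  have Mc: "M \<in> carrier_mat m m" "C \<in> carrier_mat m m" "R \<in> carrier_mat m m" "N \<in> carrier_mat m m"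
    by (auto simp: M_def C_def R_def N_def)
  have dR: "det R = 1"
    by (subst det_lower_triangular[of m], auto simp: R_def diag_mat_def prod_list_zero_iff
        intro!: prod_list_neutral)
  have dC: "det C = 1"
    by (subst det_lower_triangular[of m], auto simp: C_def diag_mat_def intro!: prod_list_neutral)
  have "det T = prod_list (diag_mat T)"
    by (rule det_upper_triangular[of _ m], auto simp: T_def upper_triangular_def)
  also have "diag_mat T = (a + of_nat m * b) # replicate (m-1) a"
  proof -
    obtain m' where m': "m = Suc m'" using m by (cases m) auto
    have "map (\<lambda>i. T $$ (i, i)) [1..<Suc m'] = replicate m' a"
      by (rule nth_equalityI) (auto simp: T_def m' nth_upt simp del: upt_Suc)
    moreover have "[0..<Suc m'] = 0 # [1..<Suc m']" using upt_conv_Cons[of 0 "Suc m'"] by simp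
    moreover have "dim_row T = Suc m'" "T $$ (0,0) = a + of_nat m * b" by (auto simp: T_def m')
    ultimately show ?thesis unfolding diag_mat_def using m' by (simp only: list.map) simp
  qed
  finally have dT: "det T = (a + of_nat m * b) * a^(m-1)" by simp
  have "det T = det R * det (M * C)" using RN MC Mc det_mult by metis
  also have "\<dots> = det M" using det_mult[OF Mc(1,2)] dR dC by simp
  finally show ?thesis using dT M_def by simp
qed



lemma card_SD: "card (carrier (SD n)) = 8*n"
proof -
  have "carrier (SD n) = {..<4*n} \<times> {..<2}" by (auto simp: SD_def)
  then show ?thesis by (simp add: card_cartesian_product)
qed

lemma finite_SD: "finite (carrier (SD n))"
proof -
  have "carrier (SD n) = {..<4*n} \<times> {..<2}" by (auto simp: SD_def)
  then show ?thesis by simp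
qed

theorem corollary4p6:
  fixes n :: nat and vs :: "(nat \<times> nat) list"
  assumes "n \<ge> 2"
    and "distinct vs" and "set vs = carrier (SD n)"
  shows "sombor_spectrum (carrier (SD n)) (order_super_commuting_adj (SD n)) vs =
           replicate_mset (8 * n - 1) (- (real (8 * n) - 1) * sqrt 2)
           + {# (real (8 * n) - 1) ^ 2 * sqrt 2 #}"
proof -
  have n1: "n \<ge> 1" using assms(1) by simp
  define C where "C = carrier (SD n)"
  define E where "E = order_super_commuting_adj (SD n)"
  define m where "m = length vs"
  define d :: real where "d = real (8*n) - 1"
  define c :: real where "c = d * sqrt 2"
  have Eiff: "E g h \<longleftrightarrow> g \<in> C \<and> h \<in> C \<and> g \<noteq> h" for g h
    unfolding E_def C_def by (rule adj_iff[OF n1])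
  have m: "m = 8*n" unfolding m_def using distinct_card[OF assms(2)] assms(3) card_SD by simp
  have m1: "m \<ge> 1" using m n1 by simp
  have deg: "graph_degree C E u = 8*n - 1" if u: "u \<in> C" for u
  proof -
    have "{v \<in> C. E u v} = C - {u}" using u by (auto simp: Eiff)
    then show ?thesis unfolding graph_degree_def using u finite_SD card_SD
      by (simp add: C_def card_Diff_singleton)
  qed
  have dreal: "real (8*n - 1) = d" unfolding d_def using n1 by (simp add: of_nat_diff)
  have d0: "d \<ge> 0" unfolding d_def using n1 by simp
  have sq: "sqrt (d^2 + d^2) = c"
  proof -
    have "sqrt (d^2 + d^2) = sqrt (2 * d^2)" by simp
    also have "\<dots> = sqrt 2 * sqrt (d^2)" by (rule real_sqrt_mult)
    also have "\<dots> = sqrt 2 * d" using d0 by simp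
    finally show ?thesis unfolding c_def by simp
  qed
  have inC: "vs ! i \<in> C" if "i < m" for i
    unfolding C_def assms(3)[symmetric] using that unfolding m_def by (rule nth_mem)
  have SM: "sombor_matrix C E vs = mat m m (\<lambda>(i,j). if i = j then 0 else c)"
  proof (rule eq_matI)
    fix i j assume ij: "i < dim_row (mat m m (\<lambda>(i,j). if i = j then 0 else c))"
                   "j < dim_col (mat m m (\<lambda>(i,j). if i = j then (0::real) else c))"
    then have i: "i < m" and j: "j < m" by auto
    have "E (vs ! i) (vs ! j) \<longleftrightarrow> i \<noteq> j"
      using inC[OF i] inC[OF j] assms(2) i j unfolding Eiff m_def by (simp add: nth_eq_iff_index_eq)
    moreover have "sqrt (real (graph_degree C E (vs!i))^2 + real (graph_degree C E (vs!j))^2) = c"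
      by (simp only: deg[OF inC[OF i]] deg[OF inC[OF j]] dreal sq)
    ultimately show "sombor_matrix C E vs $$ (i, j) = mat m m (\<lambda>(i,j). if i = j then 0 else c) $$ (i, j)"
      using i j unfolding sombor_matrix_def m_def by simp
  qed (auto simp: sombor_matrix_def m_def)
  have CPM: "char_poly_matrix (mat m m (\<lambda>(i,j). if i = j then 0 else c)) =
     mat m m (\<lambda>(i,j). if i = j then [:c,1:] + [:-c:] else [:-c:])"
    by (rule eq_matI) (auto simp: char_poly_matrix_def)
  have CP: "char_poly (sombor_matrix C E vs) = [:c - of_nat m * c, 1:] * [:c,1:]^(m-1)"
  proof -
    have "char_poly (sombor_matrix C E vs) = ([:c,1:] + of_nat m * [:-c:]) * [:c,1:]^(m-1)"
      unfolding char_poly_def SM CPM by (rule det_aIbJ[OF m1])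
    also have "[:c,1:] + of_nat m * [:-c:] = [:c - of_nat m * c, 1:]"
      by (simp add: of_nat_poly)
    finally show ?thesis .
  qed
  have "proots (char_poly (sombor_matrix C E vs)) = {# of_nat m * c - c #} + replicate_mset (m-1) (-c)"
  proof -
    have "proots ([:c - of_nat m * c, 1:] * [:c,1:]^(m-1)) = proots [:c - of_nat m * c, 1:] + proots ([:c,1:]^(m-1))"
      by (rule proots_mult) auto
    also have "\<dots> = {#-(c - of_nat m * c)#} + repeat_mset (m-1) {#-c#}"
      by (simp only: proots_linear_factor proots_power)
    finally show ?thesis unfolding CP by simp
  qed
  moreover have "of_nat m * c - c = (real (8 * n) - 1) ^ 2 * sqrt 2"
    unfolding c_def d_def m by (simp add: power2_eq_square algebra_simps)
  moreover have "-c = - (real (8 * n) - 1) * sqrt 2" unfolding c_def d_def by (simp add: algebra_simps)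
  ultimately show ?thesis unfolding sombor_spectrum_def C_def[symmetric] E_def[symmetric] m
    by (simp add: add.commute)
qed

end
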